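(* Let $m=rn$. There is a bijection between ordered pairs $(P,Q)$ of standard Young tableaux of the same shape, both in $T([m];d)$ and both satisfying Condition (T), and walks in $\widetilde W(d,2m;\vec 0)$ staying in the region $\{x_1\ge x_2\ge\cdots\ge x_d\}$. (Explicitly: if $c_1\cdots c_m$ and $c'_1\cdots c'_m$ are the column-index sequences of $P$ and $Q$, where $c_i$ is the column of $P$ containing $i$, the pair corresponds to the walk $c_1\cdots c_m\,|\,c'_m\cdots c'_1$.)
   Context: $n,r,d\ge1$, $m=rn$. $T([m];d)$ is the set of standard Young tableaux with entries exactly $1,\dots,m$ and at most $d$ columns; row $i$ is above row $i+1$. Condition (T): for each $i\in[n]$ and $1\le s<r$, the row containing $r(i-1)+s$ is strictly above the row containing $r(i-1)+s+1$. A walk $a_1\cdots a_m|b_1\cdots b_m$ ($a_i,b_i\in[d]$) denotes the walk in $\mathbb Z^d$ from the origin with steps $e_{a_1},\dots,e_{a_m},-e_{b_1},\dots,-e_{b_m}$. $W'(d,2m;\vec 0)$ is the set of such walks ending at the origin with $a_{r(i-1)+s}\ge a_{r(i-1)+s+1}$ and $b_{r(i-1)+s}\ge b_{r(i-1)+s+1}$ for all $i\in[n]$, $1\le s<r$. For $w=a_1\cdots a_m|b_1\cdots b_m$, $\tilde w=a_1\cdots a_m|b_m\cdots b_1$, and $\widetilde W(d,2m;\vec0)=\{\tilde w:w\in W'(d,2m;\vec0)\}$. A walk stays in a region if all visited points lie in it. *)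

theory Defs
  imports Main
begin

text \<open>A tableau is a list of rows (row 0 is the top row); entries are naturals.
  Columns and rows are indexed from 1 in the paper; here row_of is 0-based
  (only comparisons are used) and col_of is 1-based.\<close>

definition is_SYT :: "nat list list \<Rightarrow> nat \<Rightarrow> bool" where
  "is_SYT T m \<longleftrightarrow>
     (\<forall>row\<in>set T. row \<noteq> []) \<and>
     (\<forall>i j. i < j \<and> j < length T \<longrightarrow> length (T!j) \<le> length (T!i)) \<and>
     distinct (concat T) \<and> set (concat T) = {1..m} \<and>
     (\<forall>i<length T. sorted_wrt (<) (T!i)) \<and>
     (\<forall>i j. Suc i < length T \<and> j < length (T!(Suc i)) \<longrightarrow> T!i!j < T!(Suc i)!j)"

definition shape :: "nat list list \<Rightarrow> nat list" where
  "shape T = map length T"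

definition SYT_set :: "nat \<Rightarrow> nat \<Rightarrow> nat list list set" where
  "SYT_set m d = {T. is_SYT T m \<and> (\<forall>row\<in>set T. length row \<le> d)}"

definition row_of :: "nat list list \<Rightarrow> nat \<Rightarrow> nat" where
  "row_of T x = (THE i. i < length T \<and> x \<in> set (T!i))"

definition col_of :: "nat list list \<Rightarrow> nat \<Rightarrow> nat" where
  "col_of T x = Suc (THE j. \<exists>i<length T. j < length (T!i) \<and> T!i!j = x)"

definition condT :: "nat \<Rightarrow> nat \<Rightarrow> nat list list \<Rightarrow> bool" where
  "condT n r T \<longleftrightarrow> (\<forall>i\<in>{1..n}. \<forall>s. 1 \<le> s \<and> s < r \<longrightarrow>
      row_of T (r*(i-1)+s) < row_of T (r*(i-1)+s+1))"

definition colseq :: "nat list list \<Rightarrow> nat \<Rightarrow> nat list" where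
  "colseq T m = map (col_of T) [1..<m+1]"

text \<open>A walk a_1..a_m | b_1..b_m is a pair of lists (as, bs); a_k = as!(k-1).
  Its steps are e_{a_1},...,e_{a_m},-e_{b_1},...,-e_{b_m}.\<close>
definition walk_steps :: "nat list \<times> nat list \<Rightarrow> (nat \<times> int) list" where
  "walk_steps w = map (\<lambda>a. (a, 1)) (fst w) @ map (\<lambda>b. (b, -1)) (snd w)"

definition walk_point :: "nat list \<times> nat list \<Rightarrow> nat \<Rightarrow> nat \<Rightarrow> int" where
  "walk_point w k j = (\<Sum>st\<leftarrow>take k (walk_steps w). if fst st = j then snd st else 0)"

definition W' :: "nat \<Rightarrow> nat \<Rightarrow> nat \<Rightarrow> (nat list \<times> nat list) set" where
  "W' d n r = {(as, bs). length as = r*n \<and> length bs = r*n \<and>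
      set as \<subseteq> {1..d} \<and> set bs \<subseteq> {1..d} \<and>
      (\<forall>j\<in>{1..d}. walk_point (as, bs) (2*(r*n)) j = 0) \<and>
      (\<forall>i\<in>{1..n}. \<forall>s. 1 \<le> s \<and> s < r \<longrightarrow>
          as!(r*(i-1)+s-1) \<ge> as!(r*(i-1)+s) \<and> bs!(r*(i-1)+s-1) \<ge> bs!(r*(i-1)+s))}"

definition W_tilde :: "nat \<Rightarrow> nat \<Rightarrow> nat \<Rightarrow> (nat list \<times> nat list) set" where
  "W_tilde d n r = (\<lambda>(as, bs). (as, rev bs)) ` W' d n r"

definition stays_in_chamber :: "nat \<Rightarrow> nat list \<times> nat list \<Rightarrow> bool" where
  "stays_in_chamber d w \<longleftrightarrow>
     (\<forall>k \<le> length (fst w) + length (snd w). \<forall>j. 1 \<le> j \<and> j < d \<longrightarrow>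
        walk_point w k j \<ge> walk_point w k (Suc j))"

end

theory Submission
  imports Defs
begin

lemma prefix_set:
  fixes P :: "nat \<Rightarrow> bool"
  assumes dc: "\<And>a b. a \<le> b \<Longrightarrow> P b \<Longrightarrow> P a" and fin: "finite {j. P j}"
  shows "{j. P j} = {..<card {j. P j}}"
proof (cases "{j. P j} = {}")
  case True then show ?thesis by simp
next
  case False
  define M where "M = Max {j. P j}"
  have PM: "P M" using Max_in[OF fin False] M_def by simp
  have "{j. P j} = {..M}"
  proof
    show "{j. P j} \<subseteq> {..M}" using Max_ge[OF fin] M_def by auto
    show "{..M} \<subseteq> {j. P j}" using dc PM by auto
  qed
  then show ?thesis by (simp add: lessThan_Suc_atMost[symmetric])
qed

definition cnt :: "nat list \<Rightarrow> nat \<Rightarrow> nat" where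
  "cnt xs j = length (filter (\<lambda>x. x = j) xs)"

lemma cnt_take: "y \<le> length c \<Longrightarrow> cnt (take y c) j = card {k. k < y \<and> c!k = j}"
proof -
  assume a: "y \<le> length c"
  have "{i. i < length (take y c) \<and> take y c ! i = j} = {k. k < y \<and> c!k = j}" using a by auto
  then show ?thesis unfolding cnt_def length_filter_conv_card by simp
qed

lemma cnt_full: "cnt c j = card {k. k < length c \<and> c!k = j}"
  unfolding cnt_def length_filter_conv_card by simp

lemma syt_row_less: "is_SYT T m \<Longrightarrow> i < length T \<Longrightarrow> j < j' \<Longrightarrow> j' < length (T!i) \<Longrightarrow> T!i!j < T!i!j'"
  unfolding is_SYT_def by (auto simp: sorted_wrt_iff_nth_less)

lemma syt_len_mono: "is_SYT T m \<Longrightarrow> i \<le> i' \<Longrightarrow> i' < length T \<Longrightarrow> length (T!i') \<le> length (T!i)"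
  unfolding is_SYT_def by (cases "i = i'") auto

lemma syt_col_less: "is_SYT T m \<Longrightarrow> i < i' \<Longrightarrow> i' < length T \<Longrightarrow> j < length (T!i') \<Longrightarrow> T!i!j < T!i'!j"
proof (induction i')
  case 0 then show ?case by simp
next
  case (Suc k)
  have step: "T!k!j < T!Suc k!j" using Suc.prems unfolding is_SYT_def by auto
  show ?case
  proof (cases "i = k")
    case True then show ?thesis using step by simp
  next
    case False
    have "j < length (T!k)" using syt_len_mono[OF Suc.prems(1), of k "Suc k"] Suc.prems by auto
    then have "T!i!j < T!k!j" using Suc False by auto
    then show ?thesis using step by simp
  qed
qed

lemma syt_nonempty: "is_SYT T m \<Longrightarrow> i < length T \<Longrightarrow> 0 < length (T!i)"
  unfolding is_SYT_def by (auto simp: nth_mem)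

lemma syt_val: "is_SYT T m \<Longrightarrow> i < length T \<Longrightarrow> j < length (T!i) \<Longrightarrow> T!i!j \<in> {1..m}"
proof -
  assume a: "is_SYT T m" "i < length T" "j < length (T!i)"
  have "T!i \<in> set T" using a(2) by (rule nth_mem)
  moreover have "T!i!j \<in> set (T!i)" using a(3) by (rule nth_mem)
  ultimately have "T!i!j \<in> set (concat T)" by auto
  then show ?thesis using a(1) unfolding is_SYT_def by blast
qed

lemma concat_cell_inj:
  "distinct (concat T) \<Longrightarrow> i < length T \<Longrightarrow> j < length (T!i) \<Longrightarrow> i' < length T \<Longrightarrow> j' < length (T!i')
   \<Longrightarrow> T!i!j = T!i'!j' \<Longrightarrow> i = i' \<and> j = j'"
proof (induction T arbitrary: i i')
  case Nil then show ?case by simp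
next
  case (Cons x xs)
  show ?case
  proof (cases i)
    case 0
    show ?thesis
    proof (cases i')
      case 0 then show ?thesis using Cons.prems \<open>i = 0\<close> \<open>i' = 0\<close> by (auto simp add: nth_eq_iff_index_eq)
    next
      case (Suc p)
      have "x!j \<in> set x" using Cons.prems(3) \<open>i=0\<close> by simp
      moreover have "xs!p \<in> set xs" using Cons.prems Suc by simp
      moreover have "xs!p!j' \<in> set (xs!p)" using Cons.prems(5) Suc by simp
      moreover have "x!j = xs!p!j'" using Cons.prems \<open>i=0\<close> Suc by simp
      ultimately show ?thesis using Cons.prems(1) by auto
    qed
  next
    case (Suc q)
    show ?thesis
    proof (cases i')
      case 0
      have "x!j' \<in> set x" using Cons.prems(5) \<open>i'=0\<close> by simp
      moreover have "xs!q \<in> set xs" using Cons.prems Suc by simp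
      moreover have "xs!q!j \<in> set (xs!q)" using Cons.prems(3) \<open>i = Suc q\<close> by simp
      moreover have "x!j' = xs!q!j" using Cons.prems \<open>i'=0\<close> Suc by simp
      ultimately show ?thesis using Cons.prems(1) by auto
    next
      case (Suc p)
      then show ?thesis using Cons.IH[of q p] Cons.prems \<open>i = Suc q\<close> by auto
    qed
  qed
qed

lemma syt_cell_inj:
  assumes "is_SYT T m" "i < length T" "j < length (T!i)" "i' < length T" "j' < length (T!i')"
    "T!i!j = T!i'!j'"
  shows "i = i' \<and> j = j'"
  using concat_cell_inj[of T i j i' j'] assms unfolding is_SYT_def by blast

lemma syt_exists_cell:
  assumes "is_SYT T m" "x \<in> {1..m}"
  shows "\<exists>i j. i < length T \<and> j < length (T!i) \<and> T!i!j = x"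
proof -
  have "x \<in> set (concat T)" using assms unfolding is_SYT_def by blast
  then obtain row where "row \<in> set T" "x \<in> set row" by auto
  then show ?thesis by (metis in_set_conv_nth)
qed

lemma syt_col_of:
  assumes "is_SYT T m" "i < length T" "j < length (T!i)"
  shows "col_of T (T!i!j) = Suc j"
proof -
  have "(THE j'. \<exists>i'<length T. j' < length (T!i') \<and> T!i'!j' = T!i!j) = j"
    apply (rule the_equality)
    using assms apply blast
    using syt_cell_inj[OF assms(1)] assms by metis
  then show ?thesis unfolding col_of_def by simp
qed

lemma syt_row_of:
  assumes "is_SYT T m" "i < length T" "j < length (T!i)"
  shows "row_of T (T!i!j) = i"
proof -
  have "(THE i'. i' < length T \<and> T!i!j \<in> set (T!i')) = i"
    apply (rule the_equality)
    using assms apply simp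
    using syt_cell_inj[OF assms(1)] assms by (metis in_set_conv_nth)
  then show ?thesis unfolding row_of_def by simp
qed

lemma colseq_length[simp]: "length (colseq T m) = m"
  unfolding colseq_def by simp

lemma colseq_nth: "p < m \<Longrightarrow> colseq T m ! p = col_of T (Suc p)"
  unfolding colseq_def by (simp del: upt_Suc add: nth_upt)

definition h :: "nat list list \<Rightarrow> nat \<Rightarrow> nat" where
  "h T jj = card {i. i < length T \<and> jj < length (T!i)}"

lemma cnt_colseq:
  assumes T: "is_SYT T m" and k: "k \<le> m"
  shows "cnt (take k (colseq T m)) (Suc jj) = card {i. i < length T \<and> jj < length (T!i) \<and> T!i!jj \<le> k}"
proof -
  have "cnt (take k (colseq T m)) (Suc jj) = card {p. p < k \<and> colseq T m ! p = Suc jj}"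
    using k by (simp add: cnt_take)
  also have "\<dots> = card {p. p < k \<and> col_of T (Suc p) = Suc jj}"
    using k by (intro arg_cong[where f=card]) (auto simp: colseq_nth)
  also have "\<dots> = card {i. i < length T \<and> jj < length (T!i) \<and> T!i!jj \<le> k}"
  proof (rule sym, rule bij_betw_same_card[where f="\<lambda>i. T!i!jj - 1"], rule bij_betwI')
    fix x y assume "x \<in> {i. i < length T \<and> jj < length (T!i) \<and> T!i!jj \<le> k}"
      "y \<in> {i. i < length T \<and> jj < length (T!i) \<and> T!i!jj \<le> k}"
    then show "(T!x!jj - 1 = T!y!jj - 1) = (x = y)"
      using syt_val[OF T, of x jj] syt_val[OF T, of y jj] syt_cell_inj[OF T, of x jj y jj] by auto
  next
    fix x assume x: "x \<in> {i. i < length T \<and> jj < length (T!i) \<and> T!i!jj \<le> k}"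
    then show "T!x!jj - 1 \<in> {p. p < k \<and> col_of T (Suc p) = Suc jj}"
      using syt_val[OF T, of x jj] syt_col_of[OF T, of x jj] by auto
  next
    fix p assume p: "p \<in> {p. p < k \<and> col_of T (Suc p) = Suc jj}"
    then have "Suc p \<in> {1..m}" using k by auto
    then obtain i j where c: "i < length T" "j < length (T!i)" "T!i!j = Suc p"
      using syt_exists_cell[OF T] by blast
    then have "j = jj" using syt_col_of[OF T c(1,2)] p by simp
    then show "\<exists>x\<in>{i. i < length T \<and> jj < length (T!i) \<and> T!i!jj \<le> k}. p = T!x!jj - 1"
      using c p by (intro bexI[of _ i]) auto
  qed
  finally show ?thesis .
qed

lemma cnt_colseq_full:
  assumes T: "is_SYT T m"
  shows "cnt (colseq T m) (Suc jj) = h T jj"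
proof -
  have "cnt (colseq T m) (Suc jj) = cnt (take m (colseq T m)) (Suc jj)" by simp
  also have "\<dots> = card {i. i < length T \<and> jj < length (T!i) \<and> T!i!jj \<le> m}"
    by (rule cnt_colseq[OF T]) simp
  also have "\<dots> = h T jj" unfolding h_def
    using syt_val[OF T] by (intro arg_cong[where f=card]) auto
  finally show ?thesis .
qed

definition lat :: "nat \<Rightarrow> nat list \<Rightarrow> bool" where
  "lat d c \<longleftrightarrow> set c \<subseteq> {1..d} \<and>
     (\<forall>k \<le> length c. \<forall>j. 1 \<le> j \<and> j < d \<longrightarrow> cnt (take k c) (Suc j) \<le> cnt (take k c) j)"

lemma colseq_lat:
  assumes T: "T \<in> SYT_set m d"
  shows "lat d (colseq T m)"
proof -
  have S: "is_SYT T m" and D: "\<forall>row\<in>set T. length row \<le> d" using T unfolding SYT_set_def by auto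
  have "set (colseq T m) \<subseteq> {1..d}"
  proof
    fix y assume "y \<in> set (colseq T m)"
    then obtain p where p: "p < m" "y = colseq T m ! p" by (auto simp: in_set_conv_nth)
    define x where "x = Suc p"
    have x: "x \<in> {1..m}" "y = col_of T x" using p colseq_nth[OF p(1)] x_def by auto
    obtain i j where c: "i < length T" "j < length (T!i)" "T!i!j = x"
      using syt_exists_cell[OF S x(1)] by blast
    have "length (T!i) \<le> d" using D c(1) by (auto simp: nth_mem)
    then show "y \<in> {1..d}" using syt_col_of[OF S c(1,2)] c x by auto
  qed
  moreover have "cnt (take k (colseq T m)) (Suc j) \<le> cnt (take k (colseq T m)) j"
    if k: "k \<le> m" and j: "1 \<le> j" for k j
  proof -
    obtain jj where jj: "j = Suc jj" using j by (cases j) auto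
    have "card {i. i < length T \<and> Suc jj < length (T!i) \<and> T!i!Suc jj \<le> k}
       \<le> card {i. i < length T \<and> jj < length (T!i) \<and> T!i!jj \<le> k}"
      by (rule card_mono) (auto dest: syt_row_less[OF S, of _ jj "Suc jj"])
    then show ?thesis using cnt_colseq[OF S k] jj by simp
  qed
  ultimately show ?thesis unfolding lat_def by auto
qed

lemma syt_rows_prefix:
  assumes T: "is_SYT T m"
  shows "{i. i < length T \<and> jj < length (T!i)} = {..<h T jj}"
  unfolding h_def
proof (rule prefix_set)
  show "finite {i. i < length T \<and> jj < length (T!i)}" by simp
  fix a b assume "a \<le> b" "b < length T \<and> jj < length (T!b)"
  then show "a < length T \<and> jj < length (T!a)" using syt_len_mono[OF T, of a b] by auto
qed

lemma syt_len_h: "is_SYT T m \<Longrightarrow> length T = h T 0"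
proof -
  assume T: "is_SYT T m"
  have "{i. i < length T \<and> 0 < length (T!i)} = {..<length T}" using syt_nonempty[OF T] by auto
  then show ?thesis unfolding h_def by simp
qed

lemma syt_rowlen_h:
  assumes T: "is_SYT T m" and i: "i < length T"
  shows "length (T!i) = card {jj. i < h T jj}"
proof -
  have "{jj. i < h T jj} = {..<length (T!i)}"
    using syt_rows_prefix[OF T] i by (auto simp: set_eq_iff)
  then show ?thesis by simp
qed

lemma shape_h:
  assumes T: "is_SYT T m" and T': "is_SYT T' m'"
  shows "shape T = shape T' \<longleftrightarrow> (\<forall>jj. h T jj = h T' jj)"
proof
  assume "shape T = shape T'"
  then have "length T = length T'" "\<And>i. i < length T \<Longrightarrow> length (T!i) = length (T'!i)"
    unfolding shape_def by (metis length_map, metis length_map nth_map)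
  then show "\<forall>jj. h T jj = h T' jj" unfolding h_def by (auto intro!: arg_cong[where f=card])
next
  assume H: "\<forall>jj. h T jj = h T' jj"
  have L: "length T = length T'" using syt_len_h[OF T] syt_len_h[OF T'] H by simp
  show "shape T = shape T'" unfolding shape_def
    using L syt_rowlen_h[OF T] syt_rowlen_h[OF T'] H by (intro nth_equalityI) auto
qed

lemma h_zero:
  assumes D: "\<forall>row\<in>set T. length row \<le> d" and jj: "d \<le> jj"
  shows "h T jj = 0"
proof -
  have "\<not> (i < length T \<and> jj < length (T!i))" for i
  proof
    assume i: "i < length T \<and> jj < length (T!i)"
    then have "T!i \<in> set T" by simp
    then have "length (T!i) \<le> d" using D by blast
    then show False using i jj by simp
  qed
  then have "{i. i < length T \<and> jj < length (T!i)} = {}" by blast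
  then show ?thesis unfolding h_def by simp
qed

lemma shape_iff:
  assumes T: "T \<in> SYT_set m d" and T': "T' \<in> SYT_set m d"
  shows "shape T = shape T' \<longleftrightarrow> (\<forall>j\<in>{1..d}. cnt (colseq T m) j = cnt (colseq T' m) j)"
proof -
  have S: "is_SYT T m" and D: "\<forall>row\<in>set T. length row \<le> d" using T unfolding SYT_set_def by auto
  have S': "is_SYT T' m" and D': "\<forall>row\<in>set T'. length row \<le> d" using T' unfolding SYT_set_def by auto
  show ?thesis unfolding shape_h[OF S S']
  proof
    assume "\<forall>jj. h T jj = h T' jj"
    then show "\<forall>j\<in>{1..d}. cnt (colseq T m) j = cnt (colseq T' m) j"
      using cnt_colseq_full[OF S] cnt_colseq_full[OF S'] by (metis atLeastAtMost_iff not0_implies_Suc not_one_le_zero)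
  next
    assume a: "\<forall>j\<in>{1..d}. cnt (colseq T m) j = cnt (colseq T' m) j"
    show "\<forall>jj. h T jj = h T' jj"
    proof
      fix jj show "h T jj = h T' jj"
      proof (cases "jj < d")
        case True
        then show ?thesis using a[rule_format, of "Suc jj"] cnt_colseq_full[OF S] cnt_colseq_full[OF S'] by simp
      next
        case False
        then show ?thesis using h_zero[OF D] h_zero[OF D'] by simp
      qed
    qed
  qed
qed

definition colL :: "nat list list \<Rightarrow> nat \<Rightarrow> nat list" where
  "colL T jj = map (\<lambda>i. T!i!jj) [0..<h T jj]"

lemma colL_sorted:
  assumes T: "is_SYT T m"
  shows "sorted_wrt (<) (colL T jj)"
  unfolding sorted_wrt_iff_nth_less colL_def
proof (intro allI impI)
  fix a b assume ab: "a < b" "b < length (map (\<lambda>i. T!i!jj) [0..<h T jj])"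
  then have "b \<in> {i. i < length T \<and> jj < length (T!i)}" using syt_rows_prefix[OF T] by auto
  then show "map (\<lambda>i. T!i!jj) [0..<h T jj] ! a < map (\<lambda>i. T!i!jj) [0..<h T jj] ! b"
    using ab syt_col_less[OF T, of a b jj] by auto
qed

lemma colL_set:
  assumes T: "is_SYT T m"
  shows "set (colL T jj) = {x\<in>{1..m}. col_of T x = Suc jj}"
proof
  show "set (colL T jj) \<subseteq> {x\<in>{1..m}. col_of T x = Suc jj}"
  proof
    fix x assume "x \<in> set (colL T jj)"
    then obtain i where i: "i < h T jj" "x = T!i!jj" unfolding colL_def by auto
    then have "i \<in> {i. i < length T \<and> jj < length (T!i)}" using syt_rows_prefix[OF T] by auto
    then show "x \<in> {x\<in>{1..m}. col_of T x = Suc jj}" using i syt_val[OF T] syt_col_of[OF T] by auto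
  qed
next
  show "{x\<in>{1..m}. col_of T x = Suc jj} \<subseteq> set (colL T jj)"
  proof
    fix x assume x: "x \<in> {x\<in>{1..m}. col_of T x = Suc jj}"
    then obtain i j where c: "i < length T" "j < length (T!i)" "T!i!j = x"
      using syt_exists_cell[OF T] by blast
    then have "j = jj" using syt_col_of[OF T c(1,2)] x by simp
    then have "i < h T jj" using syt_rows_prefix[OF T, of jj] c by auto
    then show "x \<in> set (colL T jj)" unfolding colL_def using c \<open>j = jj\<close> by auto
  qed
qed

lemma colL_nth:
  assumes T: "is_SYT T m" and i: "i < length T" and jj: "jj < length (T!i)"
  shows "T!i!jj = colL T jj ! i"
proof -
  have "i < h T jj" using syt_rows_prefix[OF T, of jj] i jj by auto
  then show ?thesis unfolding colL_def by simp
qed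

lemma colseq_inj:
  assumes T: "is_SYT T m" and T': "is_SYT T' m" and eq: "colseq T m = colseq T' m"
  shows "T = T'"
proof -
  have H: "\<forall>jj. h T jj = h T' jj" using cnt_colseq_full[OF T] cnt_colseq_full[OF T'] eq by metis
  have L: "length T = length T'" using syt_len_h[OF T] syt_len_h[OF T'] H by simp
  have RL: "\<And>i. i < length T \<Longrightarrow> length (T!i) = length (T'!i)"
    using syt_rowlen_h[OF T] syt_rowlen_h[OF T'] H L by simp
  have CE: "\<And>x. x \<in> {1..m} \<Longrightarrow> col_of T x = col_of T' x"
  proof -
    fix x :: nat assume "x \<in> {1..m}"
    then have "x - 1 < m" "Suc (x - 1) = x" by auto
    then show "col_of T x = col_of T' x" using colseq_nth[of "x - 1" m T] colseq_nth[of "x - 1" m T'] eq by metis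
  qed
  have CL: "colL T jj = colL T' jj" for jj
  proof (rule sorted_distinct_set_unique)
    show "sorted (colL T jj)" "distinct (colL T jj)" using colL_sorted[OF T] by (auto simp: strict_sorted_iff)
    show "sorted (colL T' jj)" "distinct (colL T' jj)" using colL_sorted[OF T'] by (auto simp: strict_sorted_iff)
    show "set (colL T jj) = set (colL T' jj)" using colL_set[OF T] colL_set[OF T'] CE by auto
  qed
  show ?thesis
  proof (rule nth_equalityI)
    show "length T = length T'" by (rule L)
    fix i assume i: "i < length T"
    show "T!i = T'!i"
    proof (rule nth_equalityI)
      show "length (T!i) = length (T'!i)" using RL i .
      fix jj assume jj: "jj < length (T!i)"
      show "T!i!jj = T'!i!jj"
        using colL_nth[OF T i jj] colL_nth[OF T'] i jj L RL CL by metis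
    qed
  qed
qed

lemma syt_desc:
  assumes T: "is_SYT T m" and x: "1 \<le> x" "Suc x \<le> m"
  shows "row_of T x < row_of T (Suc x) \<longleftrightarrow> col_of T (Suc x) \<le> col_of T x"
proof -
  obtain i j where c: "i < length T" "j < length (T!i)" "T!i!j = x"
    using syt_exists_cell[OF T, of x] x by auto
  obtain i' j' where c': "i' < length T" "j' < length (T!i')" "T!i'!j' = Suc x"
    using syt_exists_cell[OF T, of "Suc x"] x by auto
  have r: "row_of T x = i" "row_of T (Suc x) = i'" using syt_row_of[OF T] c c' by metis+
  have cc: "col_of T x = Suc j" "col_of T (Suc x) = Suc j'" using syt_col_of[OF T] c c' by metis+
  show ?thesis unfolding r cc
  proof
    assume ii: "i < i'"
    show "Suc j' \<le> Suc j"
    proof (rule ccontr)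
      assume "\<not> Suc j' \<le> Suc j"
      then have jj: "j < j'" by simp
      have "j' < length (T!i)" using syt_len_mono[OF T, of i i'] ii c' by simp
      then have "x < T!i!j'" using syt_row_less[OF T c(1) jj] c by simp
      moreover have "T!i!j' < Suc x" using syt_col_less[OF T ii c'(1,2)] c' by simp
      ultimately show False by simp
    qed
  next
    assume jj: "Suc j' \<le> Suc j"
    show "i < i'"
    proof (rule ccontr)
      assume "\<not> i < i'"
      then have "i' \<le> i" by simp
      show False
      proof (cases "i' = i")
        case True
        then have "j' < j \<or> j' = j" using jj by auto
        then show False
        proof
          assume "j' < j" then show False using syt_row_less[OF T c(1), of j' j] c c' True by simp
        next
          assume "j' = j" then show False using c c' True by simp
        qed
      next
        case False
        then have ilt: "i' < i" using \<open>i' \<le> i\<close> by simp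
        have "j < length (T!i')" using syt_len_mono[OF T, of i' i] ilt c by simp
        then have "T!i'!j' \<le> T!i'!j" using syt_row_less[OF T c'(1), of j' j] jj
          by (cases "j' = j") auto
        moreover have "T!i'!j < T!i!j" using syt_col_less[OF T ilt c(1,2)] .
        ultimately show False using c c' by simp
      qed
    qed
  qed
qed

lemma condT_iff:
  assumes T: "is_SYT T (r*n)"
  shows "condT n r T \<longleftrightarrow> (\<forall>i\<in>{1..n}. \<forall>s. 1 \<le> s \<and> s < r \<longrightarrow>
     colseq T (r*n) ! (r*(i-1)+s-1) \<ge> colseq T (r*n) ! (r*(i-1)+s))"
proof -
  have key: "row_of T (r*(i-1)+s) < row_of T (r*(i-1)+s+1) \<longleftrightarrow>
     colseq T (r*n) ! (r*(i-1)+s-1) \<ge> colseq T (r*n) ! (r*(i-1)+s)"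
    if i: "i \<in> {1..n}" and s: "1 \<le> s" "s < r" for i s
  proof -
    have e1: "r*(i-1) + r = r*i" using i by (cases i) auto
    have e2: "r*i \<le> r*n" using i by simp
    define x where "x = r*(i-1)+s"
    have x1: "1 \<le> x" using s x_def by simp
    have x2: "Suc x \<le> r*n" unfolding x_def using s(2) e1 e2 by linarith
    note x = x1 x2
    have "colseq T (r*n) ! (x - 1) = col_of T x" using colseq_nth[of "x-1" "r*n" T] x by simp
    moreover have "colseq T (r*n) ! x = col_of T (Suc x)" using colseq_nth[of x "r*n" T] x by simp
    ultimately show ?thesis using syt_desc[OF T x] x_def by simp
  qed
  show ?thesis unfolding condT_def using key by auto
qed

lemma sorted_below:
  assumes s: "sorted_wrt (<) (xs::nat list)" and i: "i < length xs"
  shows "{z\<in>set xs. z < xs!i} = set (take i xs)"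
proof
  show "{z\<in>set xs. z < xs!i} \<subseteq> set (take i xs)"
  proof
    fix z assume z: "z \<in> {z\<in>set xs. z < xs!i}"
    then obtain p where p: "p < length xs" "z = xs!p" by (auto simp: in_set_conv_nth)
    have "p < i"
    proof (rule ccontr)
      assume "\<not> p < i"
      then have "p = i \<or> i < p" by auto
      then have "xs!i \<le> xs!p" using sorted_wrt_nth_less[OF s, of i p] p by auto
      then show False using z p by simp
    qed
    then show "z \<in> set (take i xs)" using p by (auto simp: in_set_conv_nth intro!: exI[of _ p])
  qed
next
  show "set (take i xs) \<subseteq> {z\<in>set xs. z < xs!i}"
  proof
    fix z assume "z \<in> set (take i xs)"
    then obtain p where p: "p < i" "z = xs!p" using i by (auto simp: in_set_conv_nth)
    then show "z \<in> {z\<in>set xs. z < xs!i}" using sorted_wrt_nth_less[OF s, of p i] i by auto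
  qed
qed

lemma sorted_below_card:
  assumes s: "sorted_wrt (<) (xs::nat list)" and i: "i < length xs"
  shows "card {z\<in>set xs. z < xs!i} = i"
proof -
  have "distinct xs" using s by (simp add: strict_sorted_iff)
  then have "card (set (take i xs)) = i" using i by (simp add: distinct_card)
  then show ?thesis using sorted_below[OF s i] by simp
qed

lemma sorted_below_le:
  assumes s: "sorted_wrt (<) (xs::nat list)" and i: "i < length xs" and y: "y \<le> xs!i"
  shows "card {z\<in>set xs. z < y} \<le> i"
proof -
  have "card {z\<in>set xs. z < y} \<le> card {z\<in>set xs. z < xs!i}" using y by (intro card_mono) auto
  then show ?thesis using sorted_below_card[OF s i] by simp
qed

definition A :: "nat list \<Rightarrow> nat \<Rightarrow> nat set" where
  "A c j = {k. k < length c \<and> c!k = j}"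

definition Sv :: "nat list \<Rightarrow> nat \<Rightarrow> nat list" where
  "Sv c j = sorted_list_of_set (A c j)"

lemma A_finite[simp]: "finite (A c j)" unfolding A_def by simp

lemma Sv_set: "set (Sv c j) = A c j" unfolding Sv_def by simp
lemma Sv_sorted: "sorted_wrt (<) (Sv c j)" unfolding Sv_def by simp
lemma Sv_len: "length (Sv c j) = card (A c j)" unfolding Sv_def by simp

lemma Sv_key:
  assumes L: "lat d c" and J: "1 \<le> J" "J < d" and i: "i < length (Sv c (Suc J))"
  shows "i < length (Sv c J) \<and> Sv c J ! i < Sv c (Suc J) ! i"
proof -
  define xs where "xs = Sv c (Suc J)"
  define ys where "ys = Sv c J"
  define y where "y = xs ! i"
  have yA: "y \<in> A c (Suc J)" using i Sv_set[of c "Suc J"] unfolding y_def xs_def by (metis nth_mem)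
  then have ym: "y < length c" "c!y = Suc J" unfolding A_def by auto
  have c1: "card {z\<in>set xs. z < y} = i" using sorted_below_card[OF Sv_sorted i] unfolding y_def xs_def .
  have e1: "{k. k < Suc y \<and> c!k = Suc J} = insert y {z\<in>set xs. z < y}"
    using ym unfolding xs_def Sv_set A_def by auto
  have c2: "card {k. k < Suc y \<and> c!k = Suc J} = Suc i"
    using e1 c1 by (simp add: card_insert_if)
  have "cnt (take (Suc y) c) (Suc J) \<le> cnt (take (Suc y) c) J"
    using L J ym unfolding lat_def by auto
  then have "Suc i \<le> card {k. k < Suc y \<and> c!k = J}"
    using cnt_take[of "Suc y" c] ym c2 by simp
  moreover have "{k. k < Suc y \<and> c!k = J} = {z\<in>set ys. z < y}"
    using ym unfolding ys_def Sv_set A_def by (auto simp: less_Suc_eq)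
  ultimately have c3: "Suc i \<le> card {z\<in>set ys. z < y}" by simp
  have "card {z\<in>set ys. z < y} \<le> length ys"
    using card_mono[of "set ys" "{z\<in>set ys. z < y}"] card_length[of ys] by auto
  then have il: "i < length ys" using c3 by simp
  have "ys ! i < y"
  proof (rule ccontr)
    assume "\<not> ys ! i < y"
    then have "card {z\<in>set ys. z < y} \<le> i" using sorted_below_le[OF Sv_sorted il[unfolded ys_def]]
      unfolding ys_def by simp
    then show False using c3 by simp
  qed
  then show ?thesis using il unfolding ys_def y_def xs_def by simp
qed

lemma Sv_chain:
  assumes L: "lat d c"
  shows "a < b \<Longrightarrow> b < d \<Longrightarrow> i < length (Sv c (Suc b)) \<Longrightarrow>
    i < length (Sv c (Suc a)) \<and> Sv c (Suc a) ! i < Sv c (Suc b) ! i"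
proof (induction b)
  case 0 then show ?case by simp
next
  case (Suc b)
  have k: "i < length (Sv c (Suc b)) \<and> Sv c (Suc b) ! i < Sv c (Suc (Suc b)) ! i"
    using Sv_key[OF L, of "Suc b" i] Suc.prems by simp
  show ?case
  proof (cases "a = b")
    case True then show ?thesis using k by simp
  next
    case False
    then have "a < b" using Suc.prems by simp
    then show ?thesis using Suc.IH k Suc.prems by force
  qed
qed

lemma Sv_down:
  assumes L: "lat d c" and ab: "a \<le> b" and b: "b < d" and i: "i < length (Sv c (Suc b))"
  shows "i < length (Sv c (Suc a))"
  using Sv_chain[OF L, of a b i] ab b i by (cases "a = b") auto

definition rl :: "nat \<Rightarrow> nat list \<Rightarrow> nat \<Rightarrow> nat" where
  "rl d c i = card {jj. jj < d \<and> i < length (Sv c (Suc jj))}"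

definition mk :: "nat \<Rightarrow> nat list \<Rightarrow> nat list list" where
  "mk d c = map (\<lambda>i. map (\<lambda>jj. Suc (Sv c (Suc jj) ! i)) [0..<rl d c i]) [0..<length (Sv c 1)]"

lemma rl_prefix:
  assumes L: "lat d c"
  shows "{jj. jj < d \<and> i < length (Sv c (Suc jj))} = {..<rl d c i}"
  unfolding rl_def
proof (rule prefix_set)
  show "finite {jj. jj < d \<and> i < length (Sv c (Suc jj))}" by simp
  fix a b assume "a \<le> b" "b < d \<and> i < length (Sv c (Suc b))"
  then show "a < d \<and> i < length (Sv c (Suc a))" using Sv_down[OF L, of a b i] by auto
qed

lemma mk_len: "length (mk d c) = length (Sv c 1)" unfolding mk_def by simp
lemma mk_rowlen: "i < length (Sv c 1) \<Longrightarrow> length (mk d c ! i) = rl d c i" unfolding mk_def by simp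
lemma mk_nth: "i < length (Sv c 1) \<Longrightarrow> jj < rl d c i \<Longrightarrow> mk d c ! i ! jj = Suc (Sv c (Suc jj) ! i)"
  unfolding mk_def by simp

lemma mk_cell:
  assumes L: "lat d c" and d: "1 \<le> d"
  shows "(i < length (mk d c) \<and> jj < length (mk d c ! i)) \<longleftrightarrow> (jj < d \<and> i < length (Sv c (Suc jj)))"
proof
  assume a: "i < length (mk d c) \<and> jj < length (mk d c ! i)"
  then have "jj \<in> {..<rl d c i}" using mk_len mk_rowlen by auto
  then show "jj < d \<and> i < length (Sv c (Suc jj))" using rl_prefix[OF L] by blast
next
  assume a: "jj < d \<and> i < length (Sv c (Suc jj))"
  then have "i < length (Sv c 1)" using Sv_down[OF L, of 0 jj i] by simp
  moreover have "jj < rl d c i" using a rl_prefix[OF L, of i] by blast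
  ultimately show "i < length (mk d c) \<and> jj < length (mk d c ! i)" using mk_len mk_rowlen by simp
qed

lemma cell_inj_concat:
  "(\<And>i j i' j'. i < length T \<Longrightarrow> j < length (T!i) \<Longrightarrow> i' < length T \<Longrightarrow> j' < length (T!i')
     \<Longrightarrow> T!i!j = T!i'!j' \<Longrightarrow> i = i' \<and> j = j') \<Longrightarrow> distinct (concat T)"
proof (induction T)
  case Nil then show ?case by simp
next
  case (Cons x xs)
  have dx: "distinct x"
    unfolding distinct_conv_nth using Cons.prems[of 0 _ 0] by auto
  have dxs: "distinct (concat xs)"
    by (rule Cons.IH) (use Cons.prems[of "Suc _" _ "Suc _"] in auto)
  have disj: "set x \<inter> set (concat xs) = {}"
  proof (rule ccontr)
    assume "set x \<inter> set (concat xs) \<noteq> {}"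
    then obtain z where z: "z \<in> set x" "z \<in> set (concat xs)" by blast
    then obtain j where j: "j < length x" "x!j = z" by (auto simp: in_set_conv_nth)
    from z obtain row where "row \<in> set xs" "z \<in> set row" by auto
    then obtain p j' where p: "p < length xs" "j' < length (xs!p)" "xs!p!j' = z"
      by (metis in_set_conv_nth)
    show False using Cons.prems[of 0 j "Suc p" j'] j p by simp
  qed
  show ?case using dx dxs disj by simp
qed

lemma mk_SYT:
  assumes L: "lat d c" and d: "1 \<le> d"
  shows "mk d c \<in> SYT_set (length c) d \<and> colseq (mk d c) (length c) = c"
proof -
  define T where "T = mk d c"
  define m where "m = length c"
  have cell: "\<And>i jj. (i < length T \<and> jj < length (T!i)) \<longleftrightarrow> (jj < d \<and> i < length (Sv c (Suc jj)))"
    unfolding T_def using mk_cell[OF L d] by blast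
  have val: "\<And>i jj. i < length T \<Longrightarrow> jj < length (T!i) \<Longrightarrow> T!i!jj = Suc (Sv c (Suc jj) ! i)"
    unfolding T_def using mk_nth mk_len mk_rowlen by metis
  have inA: "\<And>i jj. i < length T \<Longrightarrow> jj < length (T!i) \<Longrightarrow> Sv c (Suc jj) ! i \<in> A c (Suc jj)"
    using cell Sv_set by (metis nth_mem)
  have cellinj: "i = i' \<and> j = j'" if "i < length T" "j < length (T!i)" "i' < length T" "j' < length (T!i')"
     "T!i!j = T!i'!j'" for i j i' j'
  proof -
    have e: "Sv c (Suc j) ! i = Sv c (Suc j') ! i'" using val that by simp
    have "c ! (Sv c (Suc j) ! i) = Suc j" "c ! (Sv c (Suc j') ! i') = Suc j'"
      using inA[OF that(1,2)] inA[OF that(3,4)] unfolding A_def by auto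
    then have jj: "j = j'" using e by simp
    have "distinct (Sv c (Suc j))" using Sv_sorted by (simp add: strict_sorted_iff)
    moreover have "i < length (Sv c (Suc j))" "i' < length (Sv c (Suc j))"
      using cell[of i j] cell[of i' j'] that jj by auto
    ultimately have "i = i'" using e jj nth_eq_iff_index_eq by metis
    then show ?thesis using jj by simp
  qed
  have exists: "\<exists>i jj. i < length T \<and> jj < length (T!i) \<and> T!i!jj = Suc p \<and> c!p = Suc jj"
    if p: "p < m" for p
  proof -
    have "c!p \<in> set c" using p m_def by simp
    then have cp: "c!p \<in> {1..d}" using L unfolding lat_def by auto
    then obtain jj where jj: "c!p = Suc jj" "jj < d" by (cases "c!p") auto
    have "p \<in> A c (Suc jj)" using p jj m_def unfolding A_def by simp
    then obtain i where i: "i < length (Sv c (Suc jj))" "Sv c (Suc jj) ! i = p"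
      using Sv_set by (metis in_set_conv_nth)
    then have "i < length T \<and> jj < length (T!i)" using cell jj by simp
    then show ?thesis using val i jj by auto
  qed
  have syt: "is_SYT T m"
    unfolding is_SYT_def
  proof (intro conjI allI impI)
    show "\<forall>row\<in>set T. row \<noteq> []"
    proof
      fix row assume "row \<in> set T"
      then obtain i where i: "i < length T" "row = T!i" by (auto simp: in_set_conv_nth)
      then have "i < length (Sv c 1)" unfolding T_def by (simp add: mk_len)
      then have "0 < length (T!i)" using cell[of i 0] d i by simp
      then show "row \<noteq> []" using i by auto
    qed
  next
    fix i j assume ij: "i < j \<and> j < length T"
    have "{jj. jj < d \<and> j < length (Sv c (Suc jj))} \<subseteq> {jj. jj < d \<and> i < length (Sv c (Suc jj))}"
      using ij by auto
    then have "rl d c j \<le> rl d c i" unfolding rl_def by (intro card_mono) auto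
    then show "length (T!j) \<le> length (T!i)" using ij unfolding T_def by (simp add: mk_len mk_rowlen)
  next
    show "distinct (concat T)" by (rule cell_inj_concat) (rule cellinj)
  next
    show "set (concat T) = {1..m}"
    proof
      show "set (concat T) \<subseteq> {1..m}"
      proof
        fix z assume "z \<in> set (concat T)"
        then obtain row where "row \<in> set T" "z \<in> set row" by auto
        then obtain i j where ij: "i < length T" "j < length (T!i)" "T!i!j = z"
          by (metis in_set_conv_nth)
        have "Sv c (Suc j) ! i < m" using inA[OF ij(1,2)] m_def unfolding A_def by simp
        then show "z \<in> {1..m}" using val[OF ij(1,2)] ij(3) by simp
      qed
      show "{1..m} \<subseteq> set (concat T)"
      proof
        fix z assume z: "z \<in> {1..m}"
        then have "z - 1 < m" by auto
        then obtain i jj where c: "i < length T" "jj < length (T!i)" "T!i!jj = Suc (z - 1)"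
          using exists[of "z - 1"] by blast
        have "T!i \<in> set T" using c(1) by simp
        moreover have "T!i!jj \<in> set (T!i)" using c(2) by simp
        ultimately show "z \<in> set (concat T)" using c(3) z by auto
      qed
    qed
  next
    fix i assume i: "i < length T"
    show "sorted_wrt (<) (T!i)"
      unfolding sorted_wrt_iff_nth_less
    proof (intro allI impI)
      fix a b assume ab: "a < b" "b < length (T!i)"
      then have "b < d \<and> i < length (Sv c (Suc b))" using cell i by blast
      then have "Sv c (Suc a) ! i < Sv c (Suc b) ! i" using Sv_chain[OF L, of a b i] ab by simp
      then show "T!i!a < T!i!b" using val i ab by simp
    qed
  next
    fix i j assume ij: "Suc i < length T \<and> j < length (T!Suc i)"
    then have b: "j < d \<and> Suc i < length (Sv c (Suc j))" using cell by blast
    then have "i < length T \<and> j < length (T!i)" using cell by simp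
    moreover have "Sv c (Suc j) ! i < Sv c (Suc j) ! Suc i"
      using sorted_wrt_nth_less[OF Sv_sorted, of i "Suc i"] b by simp
    ultimately show "T!i!j < T!Suc i!j" using val ij by simp
  qed
  have rows: "\<forall>row\<in>set T. length row \<le> d"
  proof
    fix row assume "row \<in> set T"
    then obtain i where i: "i < length T" "row = T!i" by (auto simp: in_set_conv_nth)
    have "rl d c i \<le> card {..<d}" unfolding rl_def by (intro card_mono) auto
    then show "length row \<le> d" using i unfolding T_def by (simp add: mk_len mk_rowlen)
  qed
  have cs: "colseq T m = c"
  proof (rule nth_equalityI)
    show "length (colseq T m) = length c" using m_def by simp
    fix p assume "p < length (colseq T m)"
    then have p: "p < m" by simp
    obtain i jj where c: "i < length T" "jj < length (T!i)" "T!i!jj = Suc p" "c!p = Suc jj"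
      using exists[OF p] by blast
    show "colseq T m ! p = c ! p"
      using colseq_nth[OF p] syt_col_of[OF syt c(1,2)] c by simp
  qed
  show ?thesis using syt rows cs unfolding T_def m_def SYT_set_def by simp
qed

lemma wsum: "sum_list (map (\<lambda>st. if fst st = j then snd st else 0) (map (\<lambda>a. (a, v)) xs)) = v * int (cnt xs j)"
  by (induction xs) (auto simp: cnt_def algebra_simps)

lemma wsum2: "sum_list (map ((\<lambda>st. if fst st = j then snd st else 0) \<circ> (\<lambda>a. (a, v))) xs) = v * int (cnt xs j)"
  by (induction xs) (auto simp: cnt_def algebra_simps)

lemma cnt_append: "cnt (xs @ ys) j = cnt xs j + cnt ys j" unfolding cnt_def by simp

lemma cnt_rev: "cnt (rev xs) j = cnt xs j" unfolding cnt_def by (simp add: rev_filter[symmetric])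

lemma cnt_take_drop: "cnt (take k xs) j + cnt (drop k xs) j = cnt xs j"
  using cnt_append[of "take k xs" "drop k xs" j] by simp

lemma wp_first: "k \<le> length as \<Longrightarrow> walk_point (as, bs) k j = int (cnt (take k as) j)"
  unfolding walk_point_def walk_steps_def by (simp add: take_map wsum wsum2)

lemma wp_second: "walk_point (as, bs) (length as + t) j = int (cnt as j) - int (cnt (take t bs) j)"
  unfolding walk_point_def walk_steps_def by (simp add: take_map wsum wsum2)

lemma cnt_take_rev: "t \<le> length bs \<Longrightarrow> cnt (take t (rev bs)) j = cnt bs j - cnt (take (length bs - t) bs) j"
proof -
  assume t: "t \<le> length bs"
  have "take t (rev bs) = rev (drop (length bs - t) bs)" by (simp add: take_rev)
  then have "cnt (take t (rev bs)) j = cnt (drop (length bs - t) bs) j" by (simp add: cnt_rev)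
  then show ?thesis using cnt_take_drop[of "length bs - t" bs j] by simp
qed

lemma wp_rev:
  assumes "length bs = m" "t \<le> m"
  shows "walk_point (as, rev bs) (length as + t) j = int (cnt as j) - int (cnt bs j) + int (cnt (take (m - t) bs) j)"
proof -
  have "cnt (take (m - t) bs) j \<le> cnt bs j" using cnt_take_drop[of "m - t" bs j] by simp
  then show ?thesis using wp_second[of as "rev bs" t j] cnt_take_rev[of t bs j] assms by simp
qed

theorem corollary1:
  fixes n r d :: nat
  assumes "n \<ge> 1" "r \<ge> 1" "d \<ge> 1"
  shows "bij_betw (\<lambda>(P, Q). (colseq P (r*n), rev (colseq Q (r*n))))
           {(P, Q). P \<in> SYT_set (r*n) d \<and> Q \<in> SYT_set (r*n) d \<and>
                    shape P = shape Q \<and> condT n r P \<and> condT n r Q}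
           {w \<in> W_tilde d n r. stays_in_chamber d w}"
proof -
  define m where "m = r*n"
  have d: "1 \<le> d" using assms by simp
  define X where "X = {(P, Q). P \<in> SYT_set m d \<and> Q \<in> SYT_set m d \<and>
                    shape P = shape Q \<and> condT n r P \<and> condT n r Q}"
  define f where "f = (\<lambda>(P, Q). (colseq P m, rev (colseq Q m)))"
  define DES where "DES = (\<lambda>c::nat list. \<forall>i\<in>{1..n}. \<forall>s. 1 \<le> s \<and> s < r \<longrightarrow>
     c ! (r*(i-1)+s-1) \<ge> c ! (r*(i-1)+s))"
  have syt: "\<And>T. T \<in> SYT_set m d \<Longrightarrow> is_SYT T m" unfolding SYT_set_def by simp
  have cT: "\<And>T. T \<in> SYT_set m d \<Longrightarrow> condT n r T \<longleftrightarrow> DES (colseq T m)"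
    unfolding DES_def m_def using condT_iff syt m_def by metis
  have Ychar: "w \<in> {w \<in> W_tilde d n r. stays_in_chamber d w} \<longleftrightarrow>
     (\<exists>as bs. w = (as, rev bs) \<and> length as = m \<and> length bs = m \<and> lat d as \<and> lat d bs \<and>
        (\<forall>j\<in>{1..d}. cnt as j = cnt bs j) \<and> DES as \<and> DES bs)" for w
  proof
    assume "w \<in> {w \<in> W_tilde d n r. stays_in_chamber d w}"
    then obtain as bs where w: "w = (as, rev bs)" and W: "(as, bs) \<in> W' d n r"
      and ch: "stays_in_chamber d (as, rev bs)"
      unfolding W_tilde_def by auto
    have la: "length as = m" and lb: "length bs = m" and sa: "set as \<subseteq> {1..d}" and sb: "set bs \<subseteq> {1..d}"
      and fin: "\<forall>j\<in>{1..d}. walk_point (as, bs) (2*m) j = 0"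
      and des: "DES as" "DES bs"
      using W unfolding W'_def m_def DES_def by auto
    have eq: "\<forall>j\<in>{1..d}. cnt as j = cnt bs j"
    proof
      fix j assume j: "j \<in> {1..d}"
      have "walk_point (as, bs) (length as + m) j = 0" using fin j la by (simp add: mult_2)
      then show "cnt as j = cnt bs j" using wp_second[of as bs m j] lb by simp
    qed
    have ch': "\<And>k j. k \<le> m + m \<Longrightarrow> 1 \<le> j \<Longrightarrow> j < d \<Longrightarrow>
        walk_point (as, rev bs) k (Suc j) \<le> walk_point (as, rev bs) k j"
      using ch la lb unfolding stays_in_chamber_def by auto
    have lata: "lat d as" unfolding lat_def
    proof (intro conjI sa allI impI)
      fix k j assume k: "k \<le> length as" and j: "1 \<le> j \<and> j < d"
      show "cnt (take k as) (Suc j) \<le> cnt (take k as) j"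
        using ch'[of k j] wp_first[OF k, of "rev bs"] k j la by simp
    qed
    have latb: "lat d bs" unfolding lat_def
    proof (intro conjI sb allI impI)
      fix k j assume k: "k \<le> length bs" and j: "1 \<le> j \<and> j < d"
      have "walk_point (as, rev bs) (length as + (m - k)) (Suc j) \<le> walk_point (as, rev bs) (length as + (m - k)) j"
        using ch'[of "length as + (m - k)" j] j la by simp
      moreover have "m - (m - k) = k" using k lb by simp
      ultimately show "cnt (take k bs) (Suc j) \<le> cnt (take k bs) j"
        using wp_rev[OF lb, of "m - k" as] eq j by simp
    qed
    show "\<exists>as bs. w = (as, rev bs) \<and> length as = m \<and> length bs = m \<and> lat d as \<and> lat d bs \<and>
        (\<forall>j\<in>{1..d}. cnt as j = cnt bs j) \<and> DES as \<and> DES bs"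
      using w la lb lata latb eq des by blast
  next
    assume "\<exists>as bs. w = (as, rev bs) \<and> length as = m \<and> length bs = m \<and> lat d as \<and> lat d bs \<and>
        (\<forall>j\<in>{1..d}. cnt as j = cnt bs j) \<and> DES as \<and> DES bs"
    then obtain as bs where w: "w = (as, rev bs)" and la: "length as = m" and lb: "length bs = m"
      and lata: "lat d as" and latb: "lat d bs" and eq: "\<forall>j\<in>{1..d}. cnt as j = cnt bs j"
      and des: "DES as" "DES bs" by blast
    have "(as, bs) \<in> W' d n r"
      unfolding W'_def
    proof (clarsimp, intro conjI)
      show "length as = r*n" "length bs = r*n" using la lb m_def by auto
      show "set as \<subseteq> {Suc 0..d}" "set bs \<subseteq> {Suc 0..d}" using lata latb unfolding lat_def by auto
      show "\<forall>j\<in>{Suc 0..d}. walk_point (as, bs) (2 * (r * n)) j = 0"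
      proof
        fix j assume j: "j \<in> {Suc 0..d}"
        have "walk_point (as, bs) (length as + m) j = 0"
          using wp_second[of as bs m j] lb eq j by simp
        then show "walk_point (as, bs) (2 * (r * n)) j = 0" using la m_def by (simp add: mult_2)
      qed
      show "\<forall>i\<in>{Suc 0..n}. \<forall>s. Suc 0 \<le> s \<and> s < r \<longrightarrow>
          as ! (r * (i - Suc 0) + s - Suc 0) \<ge> as ! (r * (i - Suc 0) + s) \<and>
          bs ! (r * (i - Suc 0) + s - Suc 0) \<ge> bs ! (r * (i - Suc 0) + s)"
        using des unfolding DES_def by simp
    qed
    then have wt: "w \<in> W_tilde d n r" unfolding W_tilde_def w by force
    have "stays_in_chamber d w" unfolding stays_in_chamber_def w
    proof (intro allI impI)
      fix k j assume k: "k \<le> length (fst (as, rev bs)) + length (snd (as, rev bs))" and j: "1 \<le> j \<and> j < d"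
      show "walk_point (as, rev bs) k (Suc j) \<le> walk_point (as, rev bs) k j"
      proof (cases "k \<le> m")
        case True
        then show ?thesis using wp_first[of k as "rev bs"] lata j la unfolding lat_def by simp
      next
        case False
        define t where "t = k - m"
        have kt: "k = length as + t" "t \<le> m" using False k la lb t_def by auto
        have "cnt (take (m - t) bs) (Suc j) \<le> cnt (take (m - t) bs) j"
          using latb j lb unfolding lat_def by simp
        then show ?thesis using wp_rev[OF lb kt(2), of as] kt(1) eq j by simp
      qed
    qed
    then show "w \<in> {w \<in> W_tilde d n r. stays_in_chamber d w}" using wt by simp
  qed
  have "bij_betw f X {w \<in> W_tilde d n r. stays_in_chamber d w}"
    unfolding bij_betw_def
  proof
    show "inj_on f X"
    proof (rule inj_onI)
      fix x y assume x: "x \<in> X" and y: "y \<in> X" and e: "f x = f y"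
      obtain P Q where xp: "x = (P, Q)" by fastforce
      obtain P' Q' where yp: "y = (P', Q')" by fastforce
      have "colseq P m = colseq P' m" "colseq Q m = colseq Q' m" using e xp yp unfolding f_def by auto
      moreover have "is_SYT P m" "is_SYT Q m" "is_SYT P' m" "is_SYT Q' m"
        using x y xp yp syt unfolding X_def by auto
      ultimately show "x = y" using colseq_inj xp yp by metis
    qed
  next
    show "f ` X = {w \<in> W_tilde d n r. stays_in_chamber d w}"
    proof
      show "f ` X \<subseteq> {w \<in> W_tilde d n r. stays_in_chamber d w}"
      proof
        fix w assume "w \<in> f ` X"
        then obtain P Q where PQ: "(P, Q) \<in> X" and w: "w = (colseq P m, rev (colseq Q m))"
          unfolding f_def by auto
        have P: "P \<in> SYT_set m d" and Q: "Q \<in> SYT_set m d" and sh: "shape P = shape Q"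
          and tP: "condT n r P" and tQ: "condT n r Q" using PQ unfolding X_def by auto
        show "w \<in> {w \<in> W_tilde d n r. stays_in_chamber d w}"
          unfolding Ychar
          using w colseq_lat[OF P] colseq_lat[OF Q] shape_iff[OF P Q] sh cT[OF P] cT[OF Q] tP tQ
          by (intro exI[of _ "colseq P m"] exI[of _ "colseq Q m"]) simp
      qed
    next
      show "{w \<in> W_tilde d n r. stays_in_chamber d w} \<subseteq> f ` X"
      proof
        fix w assume "w \<in> {w \<in> W_tilde d n r. stays_in_chamber d w}"
        then obtain as bs where w: "w = (as, rev bs)" and la: "length as = m" and lb: "length bs = m"
          and lata: "lat d as" and latb: "lat d bs" and eq: "\<forall>j\<in>{1..d}. cnt as j = cnt bs j"
          and des: "DES as" "DES bs" unfolding Ychar by blast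
        define P where "P = mk d as"
        define Q where "Q = mk d bs"
        have P: "P \<in> SYT_set m d" "colseq P m = as" using mk_SYT[OF lata d] la P_def by auto
        have Q: "Q \<in> SYT_set m d" "colseq Q m = bs" using mk_SYT[OF latb d] lb Q_def by auto
        have "(P, Q) \<in> X" unfolding X_def
          using P Q shape_iff[OF P(1) Q(1)] eq cT[OF P(1)] cT[OF Q(1)] des by simp
        moreover have "f (P, Q) = w" unfolding f_def using P Q w by simp
        ultimately show "w \<in> f ` X" by force
      qed
    qed
  qed
  then show ?thesis unfolding f_def X_def m_def .
qed

end
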